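(* For every positive integer $s$ there exists $q_0=q_0(s)$ such that for every $q\ge q_0$ the complete $(s+1)$-partite graph $K_{q,q,\dots,q}$ (with $s+1$ parts of size $q$) contains $s-1$ pairwise edge-disjoint 2-factors whose union can be oriented so that, for all positive integers $c,d$ with $c+d=s+1$, the union of these oriented 2-factors contains no copy of $K_{c,d}$ in which all arcs are oriented towards the same part.
   Context: A 2-factor of a graph is a spanning 2-regular subgraph. $K_{c,d}$ denotes the complete bipartite graph with parts of sizes $c$ and $d$. *)

theory Defs
  imports Main
begin

definition mp_vertices :: "nat \<Rightarrow> nat \<Rightarrow> (nat \<times> nat) set" where
  "mp_vertices r q = {0..<r} \<times> {0..<q}"

definition mp_edges :: "nat \<Rightarrow> nat \<Rightarrow> (nat \<times> nat) set set" where
  "mp_edges r q = {{u, v} | u v. u \<in> mp_vertices r q \<and> v \<in> mp_vertices r q \<and> fst u \<noteq> fst v}"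

definition is_2factor :: "'a set \<Rightarrow> 'a set set \<Rightarrow> 'a set set \<Rightarrow> bool" where
  "is_2factor V E F \<longleftrightarrow> F \<subseteq> E \<and> (\<forall>v\<in>V. card {e \<in> F. v \<in> e} = 2)"

definition is_orientation :: "'a set set \<Rightarrow> ('a \<times> 'a) set \<Rightarrow> bool" where
  "is_orientation H D \<longleftrightarrow>
     (\<forall>u v. (u, v) \<in> D \<longrightarrow> {u, v} \<in> H \<and> (v, u) \<notin> D) \<and>
     (\<forall>u v. {u, v} \<in> H \<longrightarrow> (u, v) \<in> D \<or> (v, u) \<in> D)"

end

theory Submission
  imports Defs
begin

definition nx :: "nat \<Rightarrow> nat \<Rightarrow> nat" where
  "nx m i = (if Suc i < m then Suc i else 0)"
definition pr :: "nat \<Rightarrow> nat \<Rightarrow> nat" where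
  "pr m i = (if i = 0 then m - 1 else i - 1)"
definition sh :: "nat \<Rightarrow> nat \<Rightarrow> nat \<Rightarrow> nat" where
  "sh q t j = (if j + t < q then j + t else j + t - q)"
definition shb :: "nat \<Rightarrow> nat \<Rightarrow> nat \<Rightarrow> nat" where
  "shb q t j = (if t \<le> j then j - t else j + q - t)"
definition pm :: "nat \<Rightarrow> nat \<Rightarrow> nat \<Rightarrow> nat \<times> nat \<Rightarrow> nat \<times> nat" where
  "pm m q t v = (nx m (fst v), sh q t (snd v))"
definition pv :: "nat \<Rightarrow> nat \<Rightarrow> nat \<Rightarrow> nat \<times> nat \<Rightarrow> nat \<times> nat" where
  "pv m q t v = (pr m (fst v), shb q t (snd v))"

lemma nx_lt: "0 < m \<Longrightarrow> nx m i < m" by (simp add: nx_def)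
lemma pr_lt: "0 < m \<Longrightarrow> i < m \<Longrightarrow> pr m i < m" by (auto simp add: pr_def)
lemma nx_pr: "i < m \<Longrightarrow> nx m (pr m i) = i" by (auto simp add: nx_def pr_def)
lemma pr_nx: "i < m \<Longrightarrow> pr m (nx m i) = i" by (auto simp add: nx_def pr_def)
lemma nx_ne: "2 \<le> m \<Longrightarrow> i < m \<Longrightarrow> nx m i \<noteq> i" by (auto simp add: nx_def)
lemma nx_ne_pr: "3 \<le> m \<Longrightarrow> i < m \<Longrightarrow> nx m i \<noteq> pr m i" by (auto simp add: nx_def pr_def)
lemma nx_nx: "3 \<le> m \<Longrightarrow> i < m \<Longrightarrow> nx m (nx m i) \<noteq> i" by (auto simp add: nx_def)
lemma nx_inj: "i < m \<Longrightarrow> j < m \<Longrightarrow> nx m i = nx m j \<Longrightarrow> i = j" by (auto simp add: nx_def split: if_splits)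

lemma sh_lt: "j < q \<Longrightarrow> t < q \<Longrightarrow> sh q t j < q" by (auto simp add: sh_def)
lemma shb_lt: "j < q \<Longrightarrow> t < q \<Longrightarrow> shb q t j < q" by (auto simp add: shb_def)
lemma shb_sh: "j < q \<Longrightarrow> t < q \<Longrightarrow> shb q t (sh q t j) = j" by (auto simp add: sh_def shb_def)
lemma sh_shb: "j < q \<Longrightarrow> t < q \<Longrightarrow> sh q t (shb q t j) = j" by (auto simp add: sh_def shb_def)
lemma sh_inj: "j < q \<Longrightarrow> t < q \<Longrightarrow> t' < q \<Longrightarrow> sh q t j = sh q t' j \<Longrightarrow> t = t'"
  by (auto simp add: sh_def split: if_splits)

definition dd :: "nat \<Rightarrow> nat \<Rightarrow> nat \<Rightarrow> nat" where
  "dd q x y = (if x \<le> y then y - x else y + q - x)"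
lemma L1: "a < q \<Longrightarrow> t < q \<Longrightarrow> b = sh q t a \<Longrightarrow> dd q a b = t"
  by (auto simp: dd_def sh_def)
lemma L3: "x < q \<Longrightarrow> y < q \<Longrightarrow> z < q \<Longrightarrow> dd q x z = u \<Longrightarrow> dd q y z = w \<Longrightarrow> w \<le> u \<Longrightarrow> dd q x y = u - w"
  by (auto simp: dd_def split: if_splits)
lemma L4: "x < q \<Longrightarrow> y < q \<Longrightarrow> z < q \<Longrightarrow> dd q x y = e \<Longrightarrow> dd q y z = f \<Longrightarrow> e + f < q \<Longrightarrow> dd q x z = e + f"
  by (auto simp: dd_def split: if_splits)

lemma key:
  fixes q s :: nat and A B :: "nat set"
  assumes q: "2*s \<le> q" and A: "A \<subseteq> {0..<q}" "A \<noteq> {}" and B: "B \<subseteq> {0..<q}" "B \<noteq> {}"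
    and R: "\<forall>a\<in>A. \<forall>b\<in>B. \<exists>t. 1 \<le> t \<and> t \<le> s - 1 \<and> b = sh q t a"
  shows "card A + card B \<le> s"
proof -
  obtain b0 where b0: "b0 \<in> B" using B by auto
  define h where "h a = (if a \<le> b0 then b0 - a else b0 + q - a)" for a
  have finA: "finite A" using finite_subset[OF A(1)] by simp
  have finB: "finite B" using finite_subset[OF B(1)] by simp
  obtain a0 where a0: "a0 \<in> A" "h a0 = Max (h ` A)"
    proof -
    have "Max (h ` A) \<in> h ` A" using finA A(2) by (intro Max_in) auto
    then obtain a where "a \<in> A" "Max (h ` A) = h a" by blast
    then show ?thesis using that by simp
  qed
  have a0max: "\<forall>a\<in>A. h a \<le> h a0" using a0(2) finA Max_ge by (metis finite_imageI imageI)
  define ofs where "ofs x = (if a0 \<le> x then x - a0 else x + q - a0)" for x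
  have ofsB: "1 \<le> ofs b \<and> ofs b \<le> s - 1" if "b \<in> B" for b
  proof -
    have "\<exists>t. 1 \<le> t \<and> t \<le> s - 1 \<and> b = sh q t a0" using R a0(1) that by simp
    then obtain t where t: "1 \<le> t" "t \<le> s - 1" "b = sh q t a0" by (elim exE conjE)
    have "a0 < q" using A(1) a0(1) by auto
    moreover have "t < q" using q t(1) t(2) by linarith
    ultimately have "dd q a0 b = t" using L1[OF _ _ t(3)] by blast
    then show ?thesis using t unfolding ofs_def dd_def by simp
  qed
  have ofsAB: "ofs a < ofs b" if "a \<in> A" "b \<in> B" for a b
  proof -
    have "\<exists>ta. 1 \<le> ta \<and> ta \<le> s - 1 \<and> b0 = sh q ta a" using R b0 that by simp
    then obtain ta where ta: "1 \<le> ta" "ta \<le> s - 1" "b0 = sh q ta a" by (elim exE conjE)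
    have "\<exists>t0. 1 \<le> t0 \<and> t0 \<le> s - 1 \<and> b0 = sh q t0 a0" using R b0 a0(1) by simp
    then obtain t0 where t0: "1 \<le> t0" "t0 \<le> s - 1" "b0 = sh q t0 a0" by (elim exE conjE)
    have "\<exists>t. 1 \<le> t \<and> t \<le> s - 1 \<and> b = sh q t a" using R that by simp
    then obtain t where t: "1 \<le> t" "t \<le> s - 1" "b = sh q t a" by (elim exE conjE)
    have "\<exists>t'. 1 \<le> t' \<and> t' \<le> s - 1 \<and> b = sh q t' a0" using R that a0(1) by simp
    then obtain t' where t': "1 \<le> t'" "t' \<le> s - 1" "b = sh q t' a0" by (elim exE conjE)
    have hh: "h a \<le> h a0" using a0max that by blast
    have "a0 < q" "b < q" "a < q" "b0 < q" using A(1) B(1) a0(1) that b0 by auto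
    note lt = this
    have ofsd: "ofs x = dd q a0 x" for x by (simp add: ofs_def dd_def)
    have hd: "h x = dd q x b0" for x by (simp add: h_def dd_def)
    have sq: "s - 1 < q" using q t(1) t(2) by linarith
    have e1: "dd q a b0 = ta" using L1[OF _ _ ta(3)] lt ta sq by linarith
    have e2: "dd q a0 b0 = t0" using L1[OF _ _ t0(3)] lt t0 sq by linarith
    have e3: "dd q a b = t" using L1[OF _ _ t(3)] lt t sq by linarith
    have e4: "dd q a0 b = t'" using L1[OF _ _ t'(3)] lt t' sq by linarith
    have "ta \<le> t0" using hh e1 e2 hd by simp
    then have e5: "dd q a0 a = t0 - ta" using L3[OF _ _ _ e2 e1] lt by auto
    have "t0 - ta + t < q" using t0 t q by linarith
    then have "dd q a0 b = t0 - ta + t" using L4[OF _ _ _ e5 e3] lt by auto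
    then have "t' = t0 - ta + t" using e4 by simp
    then show ?thesis using e5 e4 t(1) unfolding ofsd by linarith
  qed
  have "a0 < q" using A(1) a0(1) by auto
  then have inj: "inj_on ofs {0..<q}" by (auto simp: inj_on_def ofs_def split: if_splits)
  have cA: "card (ofs ` A) = card A" using inj A by (intro card_image) (rule inj_on_subset)
  have cB: "card (ofs ` B) = card B" using inj B by (intro card_image) (rule inj_on_subset)
  have disj: "ofs ` A \<inter> ofs ` B = {}" using ofsAB by fastforce
  have sub: "ofs ` A \<union> ofs ` B \<subseteq> {0..<s}"
  proof -
    have "ofs ` B \<subseteq> {0..<s}" using ofsB by fastforce
    moreover have "ofs ` A \<subseteq> {0..<s}"
    proof
      fix x assume "x \<in> ofs ` A"
      then obtain a where "a \<in> A" "x = ofs a" by blast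
      then show "x \<in> {0..<s}" using ofsAB[OF _ b0] ofsB[OF b0] by fastforce
    qed
    ultimately show ?thesis by blast
  qed
  have "card (ofs ` A \<union> ofs ` B) = card A + card B"
    using card_Un_disjoint[OF finite_imageI[OF finA] finite_imageI[OF finB] disj] cA cB by simp
  moreover have "card (ofs ` A \<union> ofs ` B) \<le> s" using card_mono[OF _ sub] by simp
  ultimately show ?thesis by simp
qed


lemma memV: "v \<in> mp_vertices m q \<longleftrightarrow> fst v < m \<and> snd v < q"
  by (cases v) (auto simp: mp_vertices_def)

lemma pm_V: "v \<in> mp_vertices m q \<Longrightarrow> t < q \<Longrightarrow> pm m q t v \<in> mp_vertices m q"
  by (auto simp: memV pm_def nx_lt sh_lt)
lemma pv_V: "v \<in> mp_vertices m q \<Longrightarrow> t < q \<Longrightarrow> pv m q t v \<in> mp_vertices m q"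
  by (auto simp: memV pv_def pr_lt shb_lt)
lemma pv_pm: "v \<in> mp_vertices m q \<Longrightarrow> t < q \<Longrightarrow> pv m q t (pm m q t v) = v"
  by (cases v) (auto simp: memV pv_def pm_def pr_nx shb_sh)
lemma pm_pv: "v \<in> mp_vertices m q \<Longrightarrow> t < q \<Longrightarrow> pm m q t (pv m q t v) = v"
  by (cases v) (auto simp: memV pv_def pm_def nx_pr sh_shb)
lemma fst_pm: "fst (pm m q t v) = nx m (fst v)" by (simp add: pm_def)
lemma snd_pm: "snd (pm m q t v) = sh q t (snd v)" by (simp add: pm_def)
lemma fst_pv: "fst (pv m q t v) = pr m (fst v)" by (simp add: pv_def)

lemma no2cyc:
  assumes "3 \<le> m" "v \<in> mp_vertices m q" "u = pm m q t v" "v = pm m q t' u"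
  shows False
proof -
  have "fst v < m" using assms(2) by (simp add: memV)
  moreover have "fst u = nx m (fst v)" using assms(3) by (simp add: fst_pm)
  moreover have "fst v = nx m (fst u)" using assms(4) by (simp add: fst_pm)
  ultimately show False using nx_nx[OF assms(1), of "fst v"] by metis
qed

theorem lemma2p3:
  fixes s :: nat
  assumes "s > 0"
  shows "\<exists>q0::nat. \<forall>q\<ge>q0. \<exists>(F :: nat \<Rightarrow> (nat \<times> nat) set set) (D :: ((nat \<times> nat) \<times> (nat \<times> nat)) set).
           (\<forall>i<s - 1. is_2factor (mp_vertices (s + 1) q) (mp_edges (s + 1) q) (F i)) \<and>
           (\<forall>i<s - 1. \<forall>j<s - 1. i \<noteq> j \<longrightarrow> F i \<inter> F j = {}) \<and>
           is_orientation (\<Union>i<s - 1. F i) D \<and>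
           (\<forall>c d. 0 < c \<and> 0 < d \<and> c + d = s + 1 \<longrightarrow>
              \<not> (\<exists>A B. A \<subseteq> mp_vertices (s + 1) q \<and> B \<subseteq> mp_vertices (s + 1) q \<and>
                     A \<inter> B = {} \<and> card A = c \<and> card B = d \<and>
                     (\<forall>a\<in>A. \<forall>b\<in>B. (a, b) \<in> D)))"
proof (intro exI[of _ "2*s+1"] allI impI)
  fix q :: nat assume hq: "2*s+1 \<le> q"
  define m where "m = s + 1"
  define V where "V = mp_vertices m q"
  define F where "F k = (\<lambda>v. {v, pm m q (Suc k) v}) ` V" for k
  define D where "D = {(v, pm m q t v) | v t. v \<in> V \<and> 1 \<le> t \<and> t \<le> s - 1}"
  have P1: "is_2factor V (mp_edges m q) (F k)" if k: "k < s - 1" for k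
  proof -
    define t where "t = Suc k"
    have m3: "3 \<le> m" and tq: "t < q" using k hq unfolding m_def t_def by linarith+
    have FE: "F k \<subseteq> mp_edges m q"
    proof
      fix e assume "e \<in> F k"
      then obtain v where v: "v \<in> V" "e = {v, pm m q t v}" unfolding F_def t_def by blast
      have "pm m q t v \<in> V" using pm_V v tq unfolding V_def by blast
      moreover have "fst v \<noteq> fst (pm m q t v)" using v m3 nx_ne[of m "fst v"]
        unfolding V_def by (simp add: memV fst_pm)
      ultimately have "v \<in> mp_vertices m q \<and> pm m q t v \<in> mp_vertices m q \<and> fst v \<noteq> fst (pm m q t v)"
        using v V_def by simp
      then show "e \<in> mp_edges m q" unfolding mp_edges_def v(2) by blast
    qed
    have deg: "card {e \<in> F k. v \<in> e} = 2" if v: "v \<in> V" for v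
    proof -
      have vv: "v \<in> mp_vertices m q" using v V_def by simp
      have eq: "{e \<in> F k. v \<in> e} = {{v, pm m q t v}, {pv m q t v, v}}"
      proof
        show "{e \<in> F k. v \<in> e} \<subseteq> {{v, pm m q t v}, {pv m q t v, v}}"
        proof
          fix e assume "e \<in> {e \<in> F k. v \<in> e}"
          then obtain w where w: "w \<in> V" "e = {w, pm m q t w}" "v \<in> e" unfolding F_def t_def by blast
          have ww: "w \<in> mp_vertices m q" using w V_def by simp
          show "e \<in> {{v, pm m q t v}, {pv m q t v, v}}"
          proof (cases "v = w")
            case True then show ?thesis using w by simp
          next
            case False
            then have "v = pm m q t w" using w by simp
            then have "w = pv m q t v" using pv_pm[OF ww tq] by simp
            then show ?thesis using w \<open>v = pm m q t w\<close> by auto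
          qed
        qed
      next
        have "{pv m q t v, v} = {pv m q t v, pm m q t (pv m q t v)}" using pm_pv[OF vv tq] by simp
        moreover have "pv m q t v \<in> V" using pv_V[OF vv tq] V_def by simp
        ultimately have "{pv m q t v, v} \<in> F k" unfolding F_def t_def by blast
        moreover have "{v, pm m q t v} \<in> F k" using v unfolding F_def t_def by blast
        ultimately show "{{v, pm m q t v}, {pv m q t v, v}} \<subseteq> {e \<in> F k. v \<in> e}" by auto
      qed
      have fv: "fst v < m" using vv by (simp add: memV)
      have "2 \<le> m" using m3 by simp
      then have "nx m (fst v) \<noteq> fst v" using nx_ne fv by blast
      then have n1: "pm m q t v \<noteq> v" by (metis fst_pm)
      have n2: "pm m q t v \<noteq> pv m q t v" using nx_ne_pr[OF m3 fv] fst_pm fst_pv by metis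
      have "{v, pm m q t v} \<noteq> {pv m q t v, v}" using n1 n2 by (auto simp: doubleton_eq_iff)
      then show ?thesis unfolding eq by simp
    qed
    show ?thesis unfolding is_2factor_def using FE deg by blast
  qed
  have P2: "F i \<inter> F j = {}" if ij: "i < s - 1" "j < s - 1" "i \<noteq> j" for i j
  proof (rule ccontr)
    assume "F i \<inter> F j \<noteq> {}"
    then obtain e where "e \<in> F i" "e \<in> F j" by blast
    then obtain v w where v: "v \<in> V" "e = {v, pm m q (Suc i) v}" and w: "w \<in> V" "e = {w, pm m q (Suc j) w}"
      unfolding F_def by blast
    have m3: "3 \<le> m" and tq: "Suc i < q" "Suc j < q" using ij hq unfolding m_def by linarith+
    have vv: "v \<in> mp_vertices m q" and wv: "w \<in> mp_vertices m q" using v w V_def by auto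
    have "(v = w \<and> pm m q (Suc i) v = pm m q (Suc j) w) \<or> (v = pm m q (Suc j) w \<and> pm m q (Suc i) v = w)"
      using v(2) w(2) doubleton_eq_iff[of v "pm m q (Suc i) v" w "pm m q (Suc j) w"] by metis
    then show False
    proof
      assume a: "v = w \<and> pm m q (Suc i) v = pm m q (Suc j) w"
      then have "sh q (Suc i) (snd v) = sh q (Suc j) (snd v)" using snd_pm by metis
      moreover have "snd v < q" using vv by (simp add: memV)
      ultimately have "Suc i = Suc j" using sh_inj tq by blast
      then show False using ij by simp
    next
      assume a: "v = pm m q (Suc j) w \<and> pm m q (Suc i) v = w"
      then show False using no2cyc[OF m3 vv, of w "Suc i" "Suc j"] by argo
    qed
  qed
  have P3: "is_orientation (\<Union>i<s - 1. F i) D"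
    unfolding is_orientation_def
  proof (intro conjI allI impI)
    fix u v assume "(u, v) \<in> D"
    then obtain t where t: "u \<in> V" "1 \<le> t" "t \<le> s - 1" "v = pm m q t u" unfolding D_def by blast
    have m3: "3 \<le> m" and tq: "t < q" using t hq unfolding m_def by linarith+
    have uv: "u \<in> mp_vertices m q" using t V_def by simp
    have "{u, v} \<in> F (t - 1)" using t unfolding F_def by (simp add: image_iff) (metis Suc_pred' One_nat_def Suc_le_eq)
    moreover have "t - 1 < s - 1" using t by linarith
    ultimately show "{u, v} \<in> (\<Union>i<s - 1. F i)" by blast
    show "(v, u) \<notin> D"
    proof
      assume "(v, u) \<in> D"
      then obtain t' where t': "u = pm m q t' v" unfolding D_def by blast
      show False using no2cyc[OF m3 uv t(4) t'] .
    qed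
  next
    fix u v assume "{u, v} \<in> (\<Union>i<s - 1. F i)"
    then obtain k w where k: "k < s - 1" "w \<in> V" "{u, v} = {w, pm m q (Suc k) w}" unfolding F_def by blast
    have "1 \<le> Suc k" "Suc k \<le> s - 1" using k by auto
    then have "(w, pm m q (Suc k) w) \<in> D" using k unfolding D_def by blast
    then show "(u, v) \<in> D \<or> (v, u) \<in> D" using k(3) by (auto simp: doubleton_eq_iff)
  qed
  have P4: "\<not> (\<exists>A B. A \<subseteq> V \<and> B \<subseteq> V \<and> A \<inter> B = {} \<and> card A = c \<and> card B = d \<and>
                     (\<forall>a\<in>A. \<forall>b\<in>B. (a, b) \<in> D))"
    if cd: "0 < c" "0 < d" "c + d = s + 1" for c d
  proof
    assume "\<exists>A B. A \<subseteq> V \<and> B \<subseteq> V \<and> A \<inter> B = {} \<and> card A = c \<and> card B = d \<and>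
                     (\<forall>a\<in>A. \<forall>b\<in>B. (a, b) \<in> D)"
    then obtain A B where AB: "A \<subseteq> V" "B \<subseteq> V" "card A = c" "card B = d"
       "\<forall>a\<in>A. \<forall>b\<in>B. (a, b) \<in> D" by blast
    have Ane: "A \<noteq> {}" and Bne: "B \<noteq> {}" using AB cd by auto
    have arc: "\<exists>t. 1 \<le> t \<and> t \<le> s - 1 \<and> b = pm m q t a" if "a \<in> A" "b \<in> B" for a b
    proof -
      have "(a, b) \<in> D" using AB that by blast
      then show ?thesis unfolding D_def by blast
    qed
    obtain a1 where a1: "a1 \<in> A" using Ane by blast
    obtain b1 where b1: "b1 \<in> B" using Bne by blast
    have inV: "fst x < m \<and> snd x < q" if "x \<in> A \<union> B" for x using that AB V_def memV by blast
    have fA: "fst a = fst a1" if aA: "a \<in> A" for a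
    proof -
      obtain t where "b1 = pm m q t a" using arc[OF aA b1] by blast
      moreover obtain t' where "b1 = pm m q t' a1" using arc[OF a1 b1] by blast
      ultimately have "nx m (fst a) = nx m (fst a1)" by (metis fst_pm)
      then show ?thesis using nx_inj inV aA a1 by blast
    qed
    have fB: "fst b = fst b1" if bB: "b \<in> B" for b
    proof -
      obtain t where "b = pm m q t a1" using arc[OF a1 bB] by blast
      moreover obtain t' where "b1 = pm m q t' a1" using arc[OF a1 b1] by blast
      ultimately show ?thesis by (metis fst_pm)
    qed
    have injA: "inj_on snd A" using fA by (intro inj_onI) (metis prod_eqI)
    have injB: "inj_on snd B" using fB by (intro inj_onI) (metis prod_eqI)
    have "card (snd ` A) + card (snd ` B) \<le> s"
    proof (rule key)
      show "2 * s \<le> q" using hq by linarith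
      show "snd ` A \<subseteq> {0..<q}" using inV by fastforce
      show "snd ` B \<subseteq> {0..<q}" using inV by fastforce
      show "snd ` A \<noteq> {}" "snd ` B \<noteq> {}" using Ane Bne by auto
      show "\<forall>a\<in>snd ` A. \<forall>b\<in>snd ` B. \<exists>t. 1 \<le> t \<and> t \<le> s - 1 \<and> b = sh q t a"
      proof (intro ballI)
        fix x y assume "x \<in> snd ` A" "y \<in> snd ` B"
        then obtain a b where ab: "a \<in> A" "b \<in> B" "x = snd a" "y = snd b" by blast
        obtain t where "1 \<le> t \<and> t \<le> s - 1 \<and> b = pm m q t a" using arc[OF ab(1,2)] by blast
        then show "\<exists>t. 1 \<le> t \<and> t \<le> s - 1 \<and> y = sh q t x" using ab snd_pm by metis
      qed
    qed
    then have "c + d \<le> s" using AB card_image injA injB by metis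
    then show False using cd by simp
  qed
  show "\<exists>(F :: nat \<Rightarrow> (nat \<times> nat) set set) (D :: ((nat \<times> nat) \<times> (nat \<times> nat)) set).
           (\<forall>i<s - 1. is_2factor (mp_vertices (s + 1) q) (mp_edges (s + 1) q) (F i)) \<and>
           (\<forall>i<s - 1. \<forall>j<s - 1. i \<noteq> j \<longrightarrow> F i \<inter> F j = {}) \<and>
           is_orientation (\<Union>i<s - 1. F i) D \<and>
           (\<forall>c d. 0 < c \<and> 0 < d \<and> c + d = s + 1 \<longrightarrow>
              \<not> (\<exists>A B. A \<subseteq> mp_vertices (s + 1) q \<and> B \<subseteq> mp_vertices (s + 1) q \<and>
                     A \<inter> B = {} \<and> card A = c \<and> card B = d \<and>
                     (\<forall>a\<in>A. \<forall>b\<in>B. (a, b) \<in> D)))"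
  proof (rule exI[of _ F], rule exI[of _ D], intro conjI allI impI)
    fix i assume "i < s - 1"
    then show "is_2factor (mp_vertices (s + 1) q) (mp_edges (s + 1) q) (F i)"
      using P1 unfolding V_def m_def by simp
  next
    fix i j assume "i < s - 1" "j < s - 1" "i \<noteq> j"
    then show "F i \<inter> F j = {}" using P2 by simp
  next
    show "is_orientation (\<Union>i<s - 1. F i) D" using P3 .
  next
    fix c d :: nat assume "0 < c \<and> 0 < d \<and> c + d = s + 1"
    then show "\<not> (\<exists>A B. A \<subseteq> mp_vertices (s + 1) q \<and> B \<subseteq> mp_vertices (s + 1) q \<and>
                     A \<inter> B = {} \<and> card A = c \<and> card B = d \<and>
                     (\<forall>a\<in>A. \<forall>b\<in>B. (a, b) \<in> D))"
      using P4[of c d] unfolding V_def m_def by simp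
  qed
qed

end
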